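(* Let \(G=(V,E)\) be a connected split graph with clique \(C\) and independent set \(I\), and let \(T\) be a spanning tree of \(G\). Let \(X\) be any one of the searches MNS, MCS, LDFS, LBFS. Then \(T\) is the \(\mathcal{L}\)-tree of some \(X\) ordering of \(G\) if and only if there exist a partition \(V=L\cup V(P)\) and a path \(P=(v_1,\dots,v_k)\) in \(T\) such that: (1) \(T\) is a caterpillar tree consisting of the set of leaves \(L\) and the dominating path \(P\), and \(P\) contains every vertex of \(C\); (2) for every leaf \(w\in L\) whose neighbor in \(T\) is \(v_i\), we have \(wv_j\notin E\) for all \(j>i\); (3) for every \(v_i\in I\cap V(P)\), with \(l:=|\{v_1,\dots,v_{i-1}\}\cap C|\): (a) \(\{v_1,\dots,v_{i-1}\}\cap C\subseteq N(v_i)\), and (b) \(\{v_{i+1},\dots,v_{i+\deg(v_i)-l}\}\subseteq N(v_i)\).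
   Context: A split graph is a graph whose vertex set can be partitioned into a clique \(C\) and an independent set \(I\). A tree is a caterpillar if it has a dominating path, i.e., a path such that every vertex is on it or adjacent to a vertex on it. \(\deg(v)=|N(v)|\) in \(G\). With \(n=|V|\): an LBFS ordering is produced by starting with label \((n)\) on a start vertex \(s\), empty labels elsewhere, and for \(i=1,\dots,n\) picking an unnumbered vertex of lexicographically largest label as \(v_i\) and appending \(n-i\) to the labels of its unnumbered neighbors. An LDFS ordering is produced similarly with \(s\) labelled \((0)\), others empty, and prepending \(i\) instead. An MCS ordering is produced by repeatedly choosing an unnumbered vertex with the most numbered neighbors. An MNS ordering uses set labels: all \(\emptyset\), \(s\) gets \(\{n+1\}\); repeatedly pick an unnumbered vertex with inclusion-maximal label as \(v_i\) and add \(i\) to the labels of its unnumbered neighbors. Ties are broken arbitrarily. The \(\mathcal{L}\)-tree of an ordering \(\sigma=(u_1,\dots,u_n)\) is the tree on \(V\) containing, for each \(i\ge2\), the edge from \(u_i\) to its rightmost neighbor \(u_j\) with \(j<i\). *)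

theory Defs
  imports Main
begin

definition adj :: "'a set set \<Rightarrow> 'a \<Rightarrow> 'a \<Rightarrow> bool" where
  "adj E u v \<longleftrightarrow> {u, v} \<in> E"

definition graph :: "'a set \<Rightarrow> 'a set set \<Rightarrow> bool" where
  "graph V E \<longleftrightarrow> finite V \<and> (\<forall>e\<in>E. \<exists>u v. e = {u, v} \<and> u \<noteq> v \<and> u \<in> V \<and> v \<in> V)"

definition nbhd :: "'a set set \<Rightarrow> 'a \<Rightarrow> 'a set" where
  "nbhd E v = {u. adj E v u}"

definition deg :: "'a set set \<Rightarrow> 'a \<Rightarrow> nat" where
  "deg E v = card (nbhd E v)"

definition connected :: "'a set \<Rightarrow> 'a set set \<Rightarrow> bool" where
  "connected V E \<longleftrightarrow> V \<noteq> {} \<and> (\<forall>u\<in>V. \<forall>v\<in>V. (adj E)\<^sup>*\<^sup>* u v)"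

definition is_path :: "'a set set \<Rightarrow> 'a list \<Rightarrow> bool" where
  "is_path E P \<longleftrightarrow> P \<noteq> [] \<and> distinct P \<and> (\<forall>i. Suc i < length P \<longrightarrow> adj E (P ! i) (P ! Suc i))"

definition has_cycle :: "'a set set \<Rightarrow> bool" where
  "has_cycle E \<longleftrightarrow> (\<exists>c. length c \<ge> 3 \<and> is_path E c \<and> adj E (last c) (hd c))"

definition is_tree :: "'a set \<Rightarrow> 'a set set \<Rightarrow> bool" where
  "is_tree V T \<longleftrightarrow> graph V T \<and> connected V T \<and> \<not> has_cycle T"

definition spanning_tree :: "'a set \<Rightarrow> 'a set set \<Rightarrow> 'a set set \<Rightarrow> bool" where
  "spanning_tree V E T \<longleftrightarrow> T \<subseteq> E \<and> is_tree V T"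

definition split_graph :: "'a set \<Rightarrow> 'a set set \<Rightarrow> 'a set \<Rightarrow> 'a set \<Rightarrow> bool" where
  "split_graph V E C I \<longleftrightarrow> graph V E \<and> C \<inter> I = {} \<and> C \<union> I = V \<and>
     (\<forall>u\<in>C. \<forall>v\<in>C. u \<noteq> v \<longrightarrow> adj E u v) \<and> (\<forall>u\<in>I. \<forall>v\<in>I. \<not> adj E u v)"

text \<open>An ordering sigma = (u_1,...,u_n) is a list; 0-based list index j corresponds to number j+1.\<close>
definition is_ordering :: "'a set \<Rightarrow> 'a list \<Rightarrow> bool" where
  "is_ordering V \<sigma> \<longleftrightarrow> distinct \<sigma> \<and> set \<sigma> = V"

definition lex_less :: "nat list \<Rightarrow> nat list \<Rightarrow> bool" where
  "lex_less xs ys \<longleftrightarrow> (xs, ys) \<in> lexord {(a, b). a < b}"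

definition earlier_nbrs :: "'a set set \<Rightarrow> 'a list \<Rightarrow> nat \<Rightarrow> 'a \<Rightarrow> nat list" where
  "earlier_nbrs E \<sigma> i u = filter (\<lambda>j. adj E (\<sigma> ! j) u) [0..<i]"

text \<open>Labels of an unnumbered vertex u just before the (i+1)-st vertex is chosen, start vertex s.\<close>
definition lbfs_label :: "'a set set \<Rightarrow> 'a list \<Rightarrow> 'a \<Rightarrow> nat \<Rightarrow> 'a \<Rightarrow> nat list" where
  "lbfs_label E \<sigma> s i u = (if u = s then [length \<sigma>] else []) @
      map (\<lambda>j. length \<sigma> - Suc j) (earlier_nbrs E \<sigma> i u)"

definition ldfs_label :: "'a set set \<Rightarrow> 'a list \<Rightarrow> 'a \<Rightarrow> nat \<Rightarrow> 'a \<Rightarrow> nat list" where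
  "ldfs_label E \<sigma> s i u = rev (map Suc (earlier_nbrs E \<sigma> i u)) @ (if u = s then [0] else [])"

definition mns_label :: "'a set set \<Rightarrow> 'a list \<Rightarrow> 'a \<Rightarrow> nat \<Rightarrow> 'a \<Rightarrow> nat set" where
  "mns_label E \<sigma> s i u = Suc ` set (earlier_nbrs E \<sigma> i u) \<union> (if u = s then {Suc (length \<sigma>)} else {})"

definition mcs_label :: "'a set set \<Rightarrow> 'a list \<Rightarrow> nat \<Rightarrow> 'a \<Rightarrow> nat" where
  "mcs_label E \<sigma> i u = length (earlier_nbrs E \<sigma> i u)"

definition lbfs_ordering :: "'a set \<Rightarrow> 'a set set \<Rightarrow> 'a list \<Rightarrow> bool" where
  "lbfs_ordering V E \<sigma> \<longleftrightarrow> is_ordering V \<sigma> \<and> (\<exists>s\<in>V. \<forall>i k. i \<le> k \<and> k < length \<sigma> \<longrightarrow>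
      \<not> lex_less (lbfs_label E \<sigma> s i (\<sigma> ! i)) (lbfs_label E \<sigma> s i (\<sigma> ! k)))"

definition ldfs_ordering :: "'a set \<Rightarrow> 'a set set \<Rightarrow> 'a list \<Rightarrow> bool" where
  "ldfs_ordering V E \<sigma> \<longleftrightarrow> is_ordering V \<sigma> \<and> (\<exists>s\<in>V. \<forall>i k. i \<le> k \<and> k < length \<sigma> \<longrightarrow>
      \<not> lex_less (ldfs_label E \<sigma> s i (\<sigma> ! i)) (ldfs_label E \<sigma> s i (\<sigma> ! k)))"

definition mns_ordering :: "'a set \<Rightarrow> 'a set set \<Rightarrow> 'a list \<Rightarrow> bool" where
  "mns_ordering V E \<sigma> \<longleftrightarrow> is_ordering V \<sigma> \<and> (\<exists>s\<in>V. \<forall>i k. i \<le> k \<and> k < length \<sigma> \<longrightarrow>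
      \<not> (mns_label E \<sigma> s i (\<sigma> ! i) \<subset> mns_label E \<sigma> s i (\<sigma> ! k)))"

definition mcs_ordering :: "'a set \<Rightarrow> 'a set set \<Rightarrow> 'a list \<Rightarrow> bool" where
  "mcs_ordering V E \<sigma> \<longleftrightarrow> is_ordering V \<sigma> \<and> (\<forall>i k. i \<le> k \<and> k < length \<sigma> \<longrightarrow>
      mcs_label E \<sigma> i (\<sigma> ! k) \<le> mcs_label E \<sigma> i (\<sigma> ! i))"

datatype search = MNS | MCS | LDFS | LBFS

fun search_ordering :: "search \<Rightarrow> 'a set \<Rightarrow> 'a set set \<Rightarrow> 'a list \<Rightarrow> bool" where
  "search_ordering MNS = mns_ordering"
| "search_ordering MCS = mcs_ordering"
| "search_ordering LDFS = ldfs_ordering"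
| "search_ordering LBFS = lbfs_ordering"

definition ltree :: "'a set set \<Rightarrow> 'a list \<Rightarrow> 'a set set" where
  "ltree E \<sigma> = {{\<sigma> ! i, \<sigma> ! j} | i j. i < length \<sigma> \<and> j < i \<and> adj E (\<sigma> ! j) (\<sigma> ! i) \<and>
      (\<forall>k. j < k \<and> k < i \<longrightarrow> \<not> adj E (\<sigma> ! k) (\<sigma> ! i))}"

end

theory Submission
  imports Defs
begin


lemma adj_sym: "adj E u v = adj E v u"
  by (simp add: adj_def insert_commute)

definition Aset :: "'a set set \<Rightarrow> 'a list \<Rightarrow> nat \<Rightarrow> 'a \<Rightarrow> nat set" where
  "Aset E \<sigma> i u = {j. j < i \<and> adj E (\<sigma> ! j) u}"

lemma Aset_sub: "Aset E \<sigma> i u \<subseteq> {..<i}"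
  by (auto simp: Aset_def)

lemma Aset_finite[simp]: "finite (Aset E \<sigma> i u)"
  by (rule finite_subset[OF Aset_sub]) simp

lemma earlier_eq: "earlier_nbrs E \<sigma> i u = sorted_list_of_set (Aset E \<sigma> i u)"
proof -
  have st: "sorted_wrt (<) (earlier_nbrs E \<sigma> i u)"
    unfolding earlier_nbrs_def by (rule sorted_wrt_filter) (simp add: sorted_wrt_upt)
  have se: "set (earlier_nbrs E \<sigma> i u) = Aset E \<sigma> i u"
    by (auto simp: earlier_nbrs_def Aset_def)
  have "length (earlier_nbrs E \<sigma> i u) = card (Aset E \<sigma> i u)"
    using st se by (metis distinct_card strict_sorted_iff)
  then show ?thesis
    using sorted_list_of_set_unique[of "Aset E \<sigma> i u" "earlier_nbrs E \<sigma> i u"] st se by simp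
qed

lemma desc_psub:
  "sorted_wrt (>) xs \<Longrightarrow> sorted_wrt (>) ys \<Longrightarrow> set xs \<subset> set ys \<Longrightarrow>
   (xs, ys) \<in> lexord {(a::nat, b). a < b}"
proof (induction ys arbitrary: xs)
  case Nil
  then show ?case by auto
next
  case (Cons y ys)
  show ?case
  proof (cases xs)
    case Nil
    then show ?thesis by simp
  next
    case (Cons x xs')
    have xy: "x \<in> set (y # ys)" using Cons.prems(3) \<open>xs = x # xs'\<close> by auto
    show ?thesis
    proof (cases "x = y")
      case False
      then have "x < y" using xy Cons.prems(2) by auto
      then show ?thesis using \<open>xs = x # xs'\<close> by simp
    next
      case True
      have s1: "set xs' \<subseteq> set ys"
      proof
        fix z assume "z \<in> set xs'"
        then have "z < x" "z \<in> set (y # ys)" using Cons.prems(1,3) \<open>xs = x # xs'\<close> by auto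
        then show "z \<in> set ys" using True by auto
      qed
      have "set xs' \<noteq> set ys"
      proof
        assume "set xs' = set ys"
        then have "set xs = set (y # ys)" using True \<open>xs = x # xs'\<close> by auto
        then show False using Cons.prems(3) by simp
      qed
      then have "set xs' \<subset> set ys" using s1 by auto
      moreover have "sorted_wrt (>) xs'" using Cons.prems(1) \<open>xs = x # xs'\<close> by simp
      moreover have "sorted_wrt (>) ys" using Cons.prems(2) by simp
      ultimately have "(xs', ys) \<in> lexord {(a, b). a < b}" using Cons.IH by blast
      then show ?thesis using True \<open>xs = x # xs'\<close> by simp
    qed
  qed
qed

fun sl :: "search \<Rightarrow> nat \<Rightarrow> nat set \<Rightarrow> nat set \<Rightarrow> bool" where
  "sl MNS n A B = (A \<subset> B)"
| "sl MCS n A B = (card A < card B)"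
| "sl LBFS n A B = lex_less (map (\<lambda>j. n - Suc j) (sorted_list_of_set A)) (map (\<lambda>j. n - Suc j) (sorted_list_of_set B))"
| "sl LDFS n A B = lex_less (rev (map Suc (sorted_list_of_set A))) (rev (map Suc (sorted_list_of_set B)))"

lemma trans_less_rel: "trans {(a::nat, b). a < b}"
  by (auto simp: trans_def)

lemma sl_irrefl: "\<not> sl X n A A"
  by (cases X) (auto simp: lex_less_def lexord_irreflexive)

lemma sl_trans: "sl X n A B \<Longrightarrow> sl X n B D \<Longrightarrow> sl X n A D"
  by (cases X) (auto simp: lex_less_def intro: lexord_trans[OF _ _ trans_less_rel])

lemma sl_psub:
  assumes "A \<subset> B" "B \<subseteq> {..<n}"
  shows "sl X n A B"
proof -
  have fB: "finite B" using assms(2) finite_subset by blast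
  have fA: "finite A" using assms(1) fB finite_subset by blast
  have inj: "inj_on (\<lambda>j. n - Suc j) B" using assms(2) by (rule inj_on_subset[rotated]) (auto simp: inj_on_def)
  show ?thesis
  proof (cases X)
    case MNS then show ?thesis using assms by simp
  next
    case MCS then show ?thesis using assms fB by (simp add: psubset_card_mono)
  next
    case LBFS
    let ?f = "\<lambda>j. n - Suc j"
    have sw: "sorted_wrt (>) (map ?f (sorted_list_of_set S))" if "S \<subseteq> {..<n}" "finite S" for S
    proof -
      have "sorted_wrt (<) (sorted_list_of_set S)" by (simp add: strict_sorted_list_of_set)
      then show ?thesis unfolding sorted_wrt_map
        by (rule sorted_wrt_mono_rel[rotated]) (use that in auto)
    qed
    have "?f ` A \<subset> ?f ` B"
      using assms inj by (metis image_mono inj_on_image_eq_iff psubsetE psubsetI subset_refl order_trans)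
    then have "set (map ?f (sorted_list_of_set A)) \<subset> set (map ?f (sorted_list_of_set B))"
      using fA fB by simp
    moreover have "A \<subseteq> {..<n}" using assms by auto
    ultimately have "(map ?f (sorted_list_of_set A), map ?f (sorted_list_of_set B)) \<in> lexord {(a, b). a < b}"
      using sw[OF assms(2) fB] sw[of A] fA by (intro desc_psub) auto
    then show ?thesis using LBFS by (simp add: lex_less_def)
  next
    case LDFS
    have sw: "sorted_wrt (>) (rev (map Suc (sorted_list_of_set S)))" if "finite S" for S
      by (simp add: sorted_wrt_rev sorted_wrt_map strict_sorted_list_of_set)
    have "Suc ` A \<subset> Suc ` B" using assms by auto
    then have "set (rev (map Suc (sorted_list_of_set A))) \<subset> set (rev (map Suc (sorted_list_of_set B)))"
      using fA fB by simp
    then have "(rev (map Suc (sorted_list_of_set A)), rev (map Suc (sorted_list_of_set B))) \<in> lexord {(a, b). a < b}"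
      using sw fA fB by (intro desc_psub) auto
    then show ?thesis using LDFS by (simp add: lex_less_def)
  qed
qed

lemma sl_sub: "A \<subseteq> B \<Longrightarrow> B \<subseteq> {..<n} \<Longrightarrow> \<not> sl X n B A"
  by (metis sl_irrefl sl_psub sl_trans subset_not_subset_eq psubsetI)




lemma earlier0: "earlier_nbrs E \<sigma> 0 u = []"
  by (simp add: earlier_nbrs_def)

lemma start_first:
  assumes "is_ordering V \<sigma>" "s \<in> V"
    and "\<And>k. k < length \<sigma> \<Longrightarrow> \<sigma> ! 0 \<noteq> s \<Longrightarrow> \<sigma> ! k = s \<Longrightarrow> False"
  shows "\<sigma> ! 0 = s"
proof -
  obtain k where "k < length \<sigma>" "\<sigma> ! k = s" using assms(1,2) by (metis in_set_conv_nth is_ordering_def)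
  then show ?thesis using assms(3) by blast
qed

lemma nth_neq0:
  assumes "distinct \<sigma>" "0 < i" "i < length \<sigma>" shows "\<sigma> ! i \<noteq> \<sigma> ! 0"
  using assms nth_eq_iff_index_eq by fastforce

lemma search_to_gen:
  assumes "search_ordering X V E \<sigma>"
  shows "is_ordering V \<sigma> \<and> (\<forall>i k. 0 < i \<and> i \<le> k \<and> k < length \<sigma> \<longrightarrow>
      \<not> sl X (length \<sigma>) (Aset E \<sigma> i (\<sigma> ! i)) (Aset E \<sigma> i (\<sigma> ! k)))"
proof (cases X)
  case MNS
  then have o: "is_ordering V \<sigma>" and "\<exists>s\<in>V. \<forall>i k. i \<le> k \<and> k < length \<sigma> \<longrightarrow>
      \<not> (mns_label E \<sigma> s i (\<sigma> ! i) \<subset> mns_label E \<sigma> s i (\<sigma> ! k))"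
    using assms by (auto simp: mns_ordering_def)
  then obtain s where s: "s \<in> V" and H: "\<And>i k. i \<le> k \<Longrightarrow> k < length \<sigma> \<Longrightarrow>
      \<not> (mns_label E \<sigma> s i (\<sigma> ! i) \<subset> mns_label E \<sigma> s i (\<sigma> ! k))" by blast
  have s0: "\<sigma> ! 0 = s"
    apply (rule start_first[OF o s])
    subgoal for k using H[of 0 k] by (auto simp: mns_label_def earlier0)
    done
  have d: "distinct \<sigma>" using o by (simp add: is_ordering_def)
  show ?thesis
  proof (intro conjI o allI impI)
    fix i k assume ik: "0 < i \<and> i \<le> k \<and> k < length \<sigma>"
    then have "\<sigma> ! i \<noteq> s" "\<sigma> ! k \<noteq> s" using nth_neq0[OF d] s0 by auto
    then show "\<not> sl X (length \<sigma>) (Aset E \<sigma> i (\<sigma> ! i)) (Aset E \<sigma> i (\<sigma> ! k))"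
      using H[of i k] ik MNS by (auto simp: mns_label_def earlier_eq inj_image_subset_iff
          simp del: image_subset_iff_subset_vimage)
  qed
next
  case MCS
  then have o: "is_ordering V \<sigma>" and H: "\<And>i k. i \<le> k \<Longrightarrow> k < length \<sigma> \<Longrightarrow>
      mcs_label E \<sigma> i (\<sigma> ! k) \<le> mcs_label E \<sigma> i (\<sigma> ! i)"
    using assms by (auto simp: mcs_ordering_def)
  show ?thesis
    using o H MCS by (auto simp: mcs_label_def earlier_eq not_less)
next
  case LBFS
  then have o: "is_ordering V \<sigma>" and "\<exists>s\<in>V. \<forall>i k. i \<le> k \<and> k < length \<sigma> \<longrightarrow>
      \<not> lex_less (lbfs_label E \<sigma> s i (\<sigma> ! i)) (lbfs_label E \<sigma> s i (\<sigma> ! k))"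
    using assms by (auto simp: lbfs_ordering_def)
  then obtain s where s: "s \<in> V" and H: "\<And>i k. i \<le> k \<Longrightarrow> k < length \<sigma> \<Longrightarrow>
      \<not> lex_less (lbfs_label E \<sigma> s i (\<sigma> ! i)) (lbfs_label E \<sigma> s i (\<sigma> ! k))" by blast
  have s0: "\<sigma> ! 0 = s"
    apply (rule start_first[OF o s])
    subgoal for k using H[of 0 k] by (auto simp: lbfs_label_def earlier0 lex_less_def)
    done
  have d: "distinct \<sigma>" using o by (simp add: is_ordering_def)
  show ?thesis
  proof (intro conjI o allI impI)
    fix i k assume ik: "0 < i \<and> i \<le> k \<and> k < length \<sigma>"
    then have "\<sigma> ! i \<noteq> s" "\<sigma> ! k \<noteq> s" using nth_neq0[OF d] s0 by auto
    then show "\<not> sl X (length \<sigma>) (Aset E \<sigma> i (\<sigma> ! i)) (Aset E \<sigma> i (\<sigma> ! k))"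
      using H[of i k] ik LBFS by (auto simp: lbfs_label_def earlier_eq)
  qed
next
  case LDFS
  then have o: "is_ordering V \<sigma>" and "\<exists>s\<in>V. \<forall>i k. i \<le> k \<and> k < length \<sigma> \<longrightarrow>
      \<not> lex_less (ldfs_label E \<sigma> s i (\<sigma> ! i)) (ldfs_label E \<sigma> s i (\<sigma> ! k))"
    using assms by (auto simp: ldfs_ordering_def)
  then obtain s where s: "s \<in> V" and H: "\<And>i k. i \<le> k \<Longrightarrow> k < length \<sigma> \<Longrightarrow>
      \<not> lex_less (ldfs_label E \<sigma> s i (\<sigma> ! i)) (ldfs_label E \<sigma> s i (\<sigma> ! k))" by blast
  have s0: "\<sigma> ! 0 = s"
    apply (rule start_first[OF o s])
    subgoal for k using H[of 0 k] by (auto simp: ldfs_label_def earlier0 lex_less_def)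
    done
  have d: "distinct \<sigma>" using o by (simp add: is_ordering_def)
  show ?thesis
  proof (intro conjI o allI impI)
    fix i k assume ik: "0 < i \<and> i \<le> k \<and> k < length \<sigma>"
    then have "\<sigma> ! i \<noteq> s" "\<sigma> ! k \<noteq> s" using nth_neq0[OF d] s0 by auto
    then show "\<not> sl X (length \<sigma>) (Aset E \<sigma> i (\<sigma> ! i)) (Aset E \<sigma> i (\<sigma> ! k))"
      using H[of i k] ik LDFS by (auto simp: ldfs_label_def earlier_eq)
  qed
qed

lemma gen_to_search:
  assumes o: "is_ordering V \<sigma>" and ne: "\<sigma> \<noteq> []"
    and H: "\<And>i k. 0 < i \<Longrightarrow> i \<le> k \<Longrightarrow> k < length \<sigma> \<Longrightarrow>
      \<not> sl X (length \<sigma>) (Aset E \<sigma> i (\<sigma> ! i)) (Aset E \<sigma> i (\<sigma> ! k))"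
  shows "search_ordering X V E \<sigma>"
proof -
  have d: "distinct \<sigma>" using o by (simp add: is_ordering_def)
  have sV: "\<sigma> ! 0 \<in> V" using o ne by (auto simp: is_ordering_def)
  have nk: "\<sigma> ! k \<noteq> \<sigma> ! 0" if "0 < k" "k < length \<sigma>" for k using nth_neq0[OF d] that by auto
  have ni: "\<sigma> ! i \<noteq> \<sigma> ! 0" "\<sigma> ! k \<noteq> \<sigma> ! 0" if "0 < i" "i \<le> k" "k < length \<sigma>" for i k
    using nk that by auto
  show ?thesis
  proof (cases X)
    case MNS
    show ?thesis unfolding MNS search_ordering.simps mns_ordering_def
    proof (intro conjI o bexI[OF _ sV] allI impI)
      fix i k assume ik: "i \<le> k \<and> k < length \<sigma>"
      show "\<not> mns_label E \<sigma> (\<sigma> ! 0) i (\<sigma> ! i) \<subset> mns_label E \<sigma> (\<sigma> ! 0) i (\<sigma> ! k)"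
      proof (cases "i = 0")
        case True
        then show ?thesis using nk[of k] ik by (cases "k = 0") (auto simp: mns_label_def earlier0)
      next
        case False
        then show ?thesis using H[of i k] ni[of i k] ik MNS
          by (auto simp: mns_label_def earlier_eq inj_image_subset_iff
              simp del: image_subset_iff_subset_vimage)
      qed
    qed
  next
    case MCS
    show ?thesis unfolding MCS search_ordering.simps mcs_ordering_def
    proof (intro conjI o allI impI)
      fix i k assume ik: "i \<le> k \<and> k < length \<sigma>"
      show "mcs_label E \<sigma> i (\<sigma> ! k) \<le> mcs_label E \<sigma> i (\<sigma> ! i)"
      proof (cases "i = 0")
        case True then show ?thesis by (simp add: mcs_label_def earlier0)
      next
        case False then show ?thesis using H[of i k] ik MCS by (auto simp: mcs_label_def earlier_eq)
      qed
    qed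
  next
    case LBFS
    show ?thesis unfolding LBFS search_ordering.simps lbfs_ordering_def
    proof (intro conjI o bexI[OF _ sV] allI impI)
      fix i k assume ik: "i \<le> k \<and> k < length \<sigma>"
      show "\<not> lex_less (lbfs_label E \<sigma> (\<sigma> ! 0) i (\<sigma> ! i)) (lbfs_label E \<sigma> (\<sigma> ! 0) i (\<sigma> ! k))"
      proof (cases "i = 0")
        case True
        then show ?thesis using nk[of k] ik
          by (cases "k = 0") (auto simp: lbfs_label_def earlier0 lex_less_def lexord_irreflexive)
      next
        case False
        then show ?thesis using H[of i k] ni[of i k] ik LBFS
          by (auto simp: lbfs_label_def earlier_eq)
      qed
    qed
  next
    case LDFS
    show ?thesis unfolding LDFS search_ordering.simps ldfs_ordering_def
    proof (intro conjI o bexI[OF _ sV] allI impI)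
      fix i k assume ik: "i \<le> k \<and> k < length \<sigma>"
      show "\<not> lex_less (ldfs_label E \<sigma> (\<sigma> ! 0) i (\<sigma> ! i)) (ldfs_label E \<sigma> (\<sigma> ! 0) i (\<sigma> ! k))"
      proof (cases "i = 0")
        case True
        then show ?thesis using nk[of k] ik
          by (cases "k = 0") (auto simp: ldfs_label_def earlier0 lex_less_def lexord_irreflexive)
      next
        case False
        then show ?thesis using H[of i k] ni[of i k] ik LDFS
          by (auto simp: ldfs_label_def earlier_eq)
      qed
    qed
  qed
qed




definition isPar :: "'a set set \<Rightarrow> 'a list \<Rightarrow> nat \<Rightarrow> nat \<Rightarrow> bool" where
  "isPar E \<sigma> j i \<longleftrightarrow> j < i \<and> i < length \<sigma> \<and> adj E (\<sigma> ! j) (\<sigma> ! i) \<and>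
     (\<forall>k. j < k \<and> k < i \<longrightarrow> \<not> adj E (\<sigma> ! k) (\<sigma> ! i))"

lemma isPar_unique: "isPar E \<sigma> j i \<Longrightarrow> isPar E \<sigma> j' i \<Longrightarrow> j = j'"
  unfolding isPar_def by (metis linorder_neqE_nat)

lemma ltree_iff:
  "e \<in> ltree E \<sigma> \<longleftrightarrow> (\<exists>i j. e = {\<sigma> ! i, \<sigma> ! j} \<and> isPar E \<sigma> j i)"
  unfolding ltree_def isPar_def by blast

lemma adj_ltree:
  assumes "distinct \<sigma>"
  shows "adj (ltree E \<sigma>) x y \<longleftrightarrow> (\<exists>a b. a < length \<sigma> \<and> b < length \<sigma> \<and> x = \<sigma> ! a \<and> y = \<sigma> ! b \<and>
     (isPar E \<sigma> b a \<or> isPar E \<sigma> a b))"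
proof
  assume "adj (ltree E \<sigma>) x y"
  then obtain i j where e: "{x, y} = {\<sigma> ! i, \<sigma> ! j}" and p: "isPar E \<sigma> j i"
    unfolding adj_def ltree_iff by blast
  have "j < length \<sigma>" "i < length \<sigma>" using p by (auto simp: isPar_def)
  then show "\<exists>a b. a < length \<sigma> \<and> b < length \<sigma> \<and> x = \<sigma> ! a \<and> y = \<sigma> ! b \<and>
     (isPar E \<sigma> b a \<or> isPar E \<sigma> a b)"
    using e p by (auto simp: doubleton_eq_iff)
next
  assume "\<exists>a b. a < length \<sigma> \<and> b < length \<sigma> \<and> x = \<sigma> ! a \<and> y = \<sigma> ! b \<and>
     (isPar E \<sigma> b a \<or> isPar E \<sigma> a b)"
  then show "adj (ltree E \<sigma>) x y"
    unfolding adj_def ltree_iff by (metis insert_commute)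
qed

lemma split_facts:
  assumes "split_graph V E C I"
  shows "finite V" "\<And>u v. adj E u v \<Longrightarrow> u \<in> V \<and> v \<in> V \<and> u \<noteq> v"
    "\<And>v. v \<in> V \<Longrightarrow> v \<in> C \<longleftrightarrow> v \<notin> I" "C \<subseteq> V" "I \<subseteq> V"
    "\<And>u v. u \<in> C \<Longrightarrow> v \<in> C \<Longrightarrow> u \<noteq> v \<Longrightarrow> adj E u v"
    "\<And>u v. u \<in> I \<Longrightarrow> v \<in> I \<Longrightarrow> \<not> adj E u v"
    "\<And>u v. adj E u v \<Longrightarrow> u \<in> I \<Longrightarrow> v \<in> C"
proof -
  show "finite V" using assms by (simp add: split_graph_def graph_def)
  show av: "\<And>u v. adj E u v \<Longrightarrow> u \<in> V \<and> v \<in> V \<and> u \<noteq> v"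
  proof -
    fix u v assume "adj E u v"
    then have "{u, v} \<in> E" by (simp add: adj_def)
    then obtain a b where "{u, v} = {a, b}" "a \<noteq> b" "a \<in> V" "b \<in> V"
      using assms by (auto simp: split_graph_def graph_def)
    then show "u \<in> V \<and> v \<in> V \<and> u \<noteq> v" by (auto simp: doubleton_eq_iff)
  qed
  show "\<And>v. v \<in> V \<Longrightarrow> v \<in> C \<longleftrightarrow> v \<notin> I" using assms by (auto simp: split_graph_def)
  show "C \<subseteq> V" "I \<subseteq> V" using assms by (auto simp: split_graph_def)
  show "\<And>u v. u \<in> C \<Longrightarrow> v \<in> C \<Longrightarrow> u \<noteq> v \<Longrightarrow> adj E u v" using assms by (auto simp: split_graph_def)
  show ni: "\<And>u v. u \<in> I \<Longrightarrow> v \<in> I \<Longrightarrow> \<not> adj E u v" using assms by (auto simp: split_graph_def)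
  show "\<And>u v. adj E u v \<Longrightarrow> u \<in> I \<Longrightarrow> v \<in> C"
    using assms av ni by (auto simp: split_graph_def)
qed




locale fwd =
  fixes V :: "'a set" and E :: "'a set set" and C I :: "'a set" and \<sigma> :: "'a list"
  assumes split: "split_graph V E C I" and conn: "connected V E" and ord: "is_ordering V \<sigma>"
    and key: "\<And>i k. i \<le> k \<Longrightarrow> k < length \<sigma> \<Longrightarrow> Aset E \<sigma> i (\<sigma> ! i) \<subseteq> Aset E \<sigma> i (\<sigma> ! k) \<Longrightarrow>
       Aset E \<sigma> i (\<sigma> ! i) = Aset E \<sigma> i (\<sigma> ! k)"
begin

abbreviation "n \<equiv> length \<sigma>"

lemma dist: "distinct \<sigma>" and setV: "set \<sigma> = V"
  using ord by (auto simp: is_ordering_def)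

lemma nthV: "i < n \<Longrightarrow> \<sigma> ! i \<in> V"
  using setV nth_mem by blast

lemma nth_inj: "i < n \<Longrightarrow> j < n \<Longrightarrow> \<sigma> ! i = \<sigma> ! j \<longleftrightarrow> i = j"
  using dist nth_eq_iff_index_eq by blast

lemma inV: "v \<in> V \<Longrightarrow> \<exists>i<n. v = \<sigma> ! i"
  using setV by (metis in_set_conv_nth)

lemma ne: "0 < n"
  using conn setV by (auto simp: connected_def)

lemmas sf = split_facts[OF split]

lemma CI: "i < n \<Longrightarrow> \<sigma> ! i \<in> C \<longleftrightarrow> \<sigma> ! i \<notin> I"
  using sf(3) nthV by blast

lemma nbrI: "adj E (\<sigma> ! j) (\<sigma> ! i) \<Longrightarrow> \<sigma> ! i \<in> I \<Longrightarrow> \<sigma> ! j \<in> C"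
  using sf(8) adj_sym by metis

lemma par_ex:
  assumes "0 < i" "i < n" shows "\<exists>p. isPar E \<sigma> p i"
proof -
  have "\<exists>j<i. adj E (\<sigma> ! j) (\<sigma> ! i)"
  proof (rule ccontr)
    assume nn: "\<not> (\<exists>j<i. adj E (\<sigma> ! j) (\<sigma> ! i))"
    then have e: "Aset E \<sigma> i (\<sigma> ! i) = {}" by (auto simp: Aset_def)
    have ek: "Aset E \<sigma> i (\<sigma> ! k) = {}" if "i \<le> k" "k < n" for k
      using key[OF that] e by simp
    let ?U = "\<lambda>v. \<exists>j<i. v = \<sigma> ! j"
    have cl: "?U v" if U: "?U u" and A: "adj E u v" for u v
    proof -
      obtain j where j: "j < i" "u = \<sigma> ! j" using U by blast
      have "v \<in> V" using sf(2)[OF A] by blast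
      then obtain k where k: "k < n" "v = \<sigma> ! k" using inV by blast
      show ?thesis
      proof (cases "k < i")
        case True then show ?thesis using k by blast
      next
        case False
        then have "j \<in> Aset E \<sigma> i (\<sigma> ! k)" using j k A by (auto simp: Aset_def)
        then show ?thesis using ek[of k] False k by auto
      qed
    qed
    have "(adj E)\<^sup>*\<^sup>* (\<sigma> ! 0) (\<sigma> ! i)"
      using conn nthV assms ne by (auto simp: connected_def)
    then have "?U (\<sigma> ! i)"
      by (induction rule: rtranclp_induct) (use assms cl in blast)+
    then obtain j where "j < i" "\<sigma> ! i = \<sigma> ! j" by blast
    then show False using nth_inj assms by auto
  qed
  then have ne': "{j. j < i \<and> adj E (\<sigma> ! j) (\<sigma> ! i)} \<noteq> {}" by blast
  define p where "p = Max {j. j < i \<and> adj E (\<sigma> ! j) (\<sigma> ! i)}"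
  have pin: "p \<in> {j. j < i \<and> adj E (\<sigma> ! j) (\<sigma> ! i)}"
    unfolding p_def by (rule Max_in) (use ne' in auto)
  have "\<not> adj E (\<sigma> ! k) (\<sigma> ! i)" if "p < k" "k < i" for k
  proof
    assume "adj E (\<sigma> ! k) (\<sigma> ! i)"
    then have "k \<le> p" unfolding p_def by (intro Max_ge) (use that in auto)
    then show False using that by simp
  qed
  then have "isPar E \<sigma> p i" using pin assms by (auto simp: isPar_def)
  then show ?thesis by blast
qed

lemma IFin:
  assumes "b \<le> k" "k < n" "\<sigma> ! b \<in> I" "\<sigma> ! k \<in> C"
  shows "Aset E \<sigma> b (\<sigma> ! b) = {j. j < b \<and> \<sigma> ! j \<in> C} \<and> Aset E \<sigma> b (\<sigma> ! k) = {j. j < b \<and> \<sigma> ! j \<in> C}"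
proof -
  have s1: "Aset E \<sigma> b (\<sigma> ! b) \<subseteq> {j. j < b \<and> \<sigma> ! j \<in> C}"
    using nbrI assms by (auto simp: Aset_def)
  have s2: "{j. j < b \<and> \<sigma> ! j \<in> C} \<subseteq> Aset E \<sigma> b (\<sigma> ! k)"
  proof
    fix j assume j: "j \<in> {j. j < b \<and> \<sigma> ! j \<in> C}"
    then have "\<sigma> ! j \<noteq> \<sigma> ! k" using nth_inj assms by auto
    then show "j \<in> Aset E \<sigma> b (\<sigma> ! k)" using j sf(6) assms by (auto simp: Aset_def)
  qed
  have "Aset E \<sigma> b (\<sigma> ! b) = Aset E \<sigma> b (\<sigma> ! k)" using key assms s1 s2 by blast
  then show ?thesis using s1 s2 by auto
qed

lemma fin_i:
  assumes "b \<le> k" "k < n" "\<sigma> ! b \<in> I" "\<sigma> ! k \<in> C" "j < b" "\<sigma> ! j \<in> C"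
  shows "adj E (\<sigma> ! j) (\<sigma> ! b)"
  using IFin[OF assms(1-4)] assms(5,6) by (auto simp: Aset_def)

lemma fin_ii:
  assumes "a < b" "b \<le> k" "k < n" "\<sigma> ! a \<in> I" "\<sigma> ! b \<in> I" "\<sigma> ! k \<in> C"
  shows "\<not> adj E (\<sigma> ! a) (\<sigma> ! k)"
proof
  assume "adj E (\<sigma> ! a) (\<sigma> ! k)"
  then have "a \<in> Aset E \<sigma> b (\<sigma> ! k)" using assms by (auto simp: Aset_def)
  then have "\<sigma> ! a \<in> C" using IFin[OF assms(2,3,5,6)] by auto
  then show False using CI assms by auto
qed

lemma cfin:
  assumes "a < b" "b \<le> k" "k < n" "\<sigma> ! a \<in> I" "adj E (\<sigma> ! a) (\<sigma> ! k)"
  shows "adj E (\<sigma> ! a) (\<sigma> ! b)"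
proof -
  have kC: "\<sigma> ! k \<in> C" using sf(8) assms by blast
  have bC: "\<sigma> ! b \<in> C" using fin_ii[OF assms(1-4) _ kC] assms(5) CI assms by auto
  have "Aset E \<sigma> b (\<sigma> ! b) \<subseteq> Aset E \<sigma> b (\<sigma> ! k)"
  proof
    fix j assume "j \<in> Aset E \<sigma> b (\<sigma> ! b)"
    then have j: "j < b" "adj E (\<sigma> ! j) (\<sigma> ! b)" by (auto simp: Aset_def)
    have jn: "j < n" using j assms by simp
    have "adj E (\<sigma> ! j) (\<sigma> ! k)"
    proof (cases "\<sigma> ! j \<in> C")
      case True
      have "\<sigma> ! j \<noteq> \<sigma> ! k" using nth_inj j assms by auto
      then show ?thesis using sf(6) True kC by blast
    next
      case False
      then have jI: "\<sigma> ! j \<in> I" using CI jn by blast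
      consider "j < a" | "j = a" | "a < j" by linarith
      then show ?thesis
      proof cases
        case 1
        then have "\<not> adj E (\<sigma> ! j) (\<sigma> ! b)" using fin_ii[OF 1, of b] assms jI bC by auto
        then show ?thesis using j by blast
      next
        case 2 then show ?thesis using assms by simp
      next
        case 3
        then have "\<not> adj E (\<sigma> ! a) (\<sigma> ! k)" using fin_ii[OF 3, of k] assms jI kC j by auto
        then show ?thesis using assms by blast
      qed
    qed
    then show "j \<in> Aset E \<sigma> b (\<sigma> ! k)" using j by (auto simp: Aset_def)
  qed
  then have "Aset E \<sigma> b (\<sigma> ! b) = Aset E \<sigma> b (\<sigma> ! k)" using key assms by auto
  moreover have "a \<in> Aset E \<sigma> b (\<sigma> ! k)" using assms by (auto simp: Aset_def)
  ultimately show ?thesis by (auto simp: Aset_def)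
qed

end



context fwd begin

definition S :: "nat set" where
  "S = {i. i < n \<and> (i = 0 \<or> \<sigma> ! i \<in> C \<or> (\<exists>k. isPar E \<sigma> i k))}"

definition ps :: "nat list" where "ps = filter (\<lambda>i. i \<in> S) [0..<n]"

definition PP :: "'a list" where "PP = map ((!) \<sigma>) ps"

lemma S_lt: "i \<in> S \<Longrightarrow> i < n" by (simp add: S_def)
lemma S0: "0 \<in> S" using ne by (simp add: S_def)
lemma SC: "i < n \<Longrightarrow> \<sigma> ! i \<in> C \<Longrightarrow> i \<in> S" by (simp add: S_def)
lemma SPar: "isPar E \<sigma> i k \<Longrightarrow> i \<in> S" by (auto simp: S_def isPar_def)
lemma S_I: "i \<in> S \<Longrightarrow> i \<noteq> 0 \<Longrightarrow> \<sigma> ! i \<in> I \<Longrightarrow> \<exists>k. isPar E \<sigma> i k"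
  using CI by (auto simp: S_def)

lemma childC: "isPar E \<sigma> i k \<Longrightarrow> \<sigma> ! i \<in> I \<Longrightarrow> \<sigma> ! k \<in> C"
  using sf(8) by (auto simp: isPar_def)

lemma parC: "isPar E \<sigma> p k \<Longrightarrow> \<sigma> ! k \<in> I \<Longrightarrow> \<sigma> ! p \<in> C"
  using nbrI by (auto simp: isPar_def)

lemma ps_sorted: "sorted_wrt (<) ps"
  unfolding ps_def by (rule sorted_wrt_filter) (simp add: sorted_wrt_upt)

lemma set_ps: "set ps = S"
  using S_lt by (auto simp: ps_def)

lemma ps_less: "a < length ps \<Longrightarrow> b < length ps \<Longrightarrow> ps ! a < ps ! b \<longleftrightarrow> a < b"
  using ps_sorted sorted_wrt_nth_less by (metis linorder_neqE_nat order_less_asym)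

lemma ps_le: "a < length ps \<Longrightarrow> b < length ps \<Longrightarrow> ps ! a \<le> ps ! b \<longleftrightarrow> a \<le> b"
  using ps_less by (metis linorder_not_le)

lemma ps_S: "a < length ps \<Longrightarrow> ps ! a \<in> S"
  using set_ps nth_mem by blast

lemma ps_n: "a < length ps \<Longrightarrow> ps ! a < n"
  using ps_S S_lt by blast

lemma S_ps: "x \<in> S \<Longrightarrow> \<exists>q<length ps. ps ! q = x"
  using set_ps by (metis in_set_conv_nth)

lemma PP_nth: "m < length ps \<Longrightarrow> PP ! m = \<sigma> ! (ps ! m)"
  by (simp add: PP_def)

lemma len_PP: "length PP = length ps" by (simp add: PP_def)

lemma set_PP: "set PP = (!) \<sigma> ` S"
  by (simp add: PP_def set_ps)

lemma dist_PP: "distinct PP"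
proof -
  have "inj_on ((!) \<sigma>) (set ps)" using nth_inj set_ps S_lt by (auto simp: inj_on_def)
  then show ?thesis unfolding PP_def using ps_sorted
    by (simp add: distinct_map strict_sorted_iff)
qed

lemma ps_ne: "ps \<noteq> []" using set_ps S0 by auto

lemma chain:
  assumes aS: "a \<in> S" and bS: "b \<in> S" and ab: "a < b" and between: "\<And>x. x \<in> S \<Longrightarrow> a < x \<Longrightarrow> x < b \<Longrightarrow> False"
  shows "isPar E \<sigma> a b"
proof -
  have bn: "b < n" using bS S_lt by blast
  obtain p where p: "isPar E \<sigma> p b" using par_ex[of b] ab bn by auto
  have pS: "p \<in> S"
  proof (cases "\<sigma> ! b \<in> C")
    case True then show ?thesis using SPar p by blast
  next
    case False
    then have "\<sigma> ! p \<in> C" using parC p CI bn by blast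
    then show ?thesis using SC p by (auto simp: isPar_def)
  qed
  have pb: "p < b" using p by (simp add: isPar_def)
  have "p \<le> a" using between[OF pS] pb by force
  moreover have "\<not> p < a"
  proof
    assume pa: "p < a"
    have an: "a < n" using ab bn by simp
    show False
    proof (cases "\<sigma> ! a \<in> C")
      case True
      have "adj E (\<sigma> ! a) (\<sigma> ! b)"
      proof (cases "\<sigma> ! b \<in> C")
        case True
        then show ?thesis using \<open>\<sigma> ! a \<in> C\<close> sf(6) nth_inj an bn ab by auto
      next
        case False
        then have bI: "\<sigma> ! b \<in> I" using CI bn by blast
        obtain k where k: "isPar E \<sigma> b k" using S_I[OF bS] bI ab by auto
        have "\<sigma> ! k \<in> C" using childC k bI by blast
        then show ?thesis using fin_i[of b k a] k bI True ab by (auto simp: isPar_def)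
      qed
      then show False using p pa ab by (auto simp: isPar_def)
    next
      case False
      then have aI: "\<sigma> ! a \<in> I" using CI an by blast
      obtain k where k: "isPar E \<sigma> a k" using S_I[OF aS] aI pa by auto
      have kC: "\<sigma> ! k \<in> C" using childC k aI by blast
      have kn: "k < n" "a < k" using k by (auto simp: isPar_def)
      have kS: "k \<in> S" using SC kn kC by blast
      consider "k < b" | "k = b" | "b < k" by linarith
      then show False
      proof cases
        case 1 then show False using between[OF kS] kn by blast
      next
        case 2 then show False using isPar_unique[OF p] k pa by blast
      next
        case 3
        show False
        proof (cases "\<sigma> ! b \<in> C")
          case True
          then have "adj E (\<sigma> ! b) (\<sigma> ! k)" using kC sf(6) nth_inj 3 kn bn by auto
          then show False using k 3 ab by (auto simp: isPar_def)
        next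
          case False
          then have "\<sigma> ! b \<in> I" using CI bn by blast
          then have "\<not> adj E (\<sigma> ! a) (\<sigma> ! k)" using fin_ii[OF ab, of k] 3 kn aI kC by auto
          then show False using k by (auto simp: isPar_def)
        qed
      qed
    qed
  qed
  ultimately show ?thesis using p by (metis le_neq_implies_less)
qed

lemma chain_ps:
  assumes "Suc m < length ps" shows "isPar E \<sigma> (ps ! m) (ps ! Suc m)"
proof (rule chain)
  show "ps ! m \<in> S" "ps ! Suc m \<in> S" using ps_S assms by auto
  show "ps ! m < ps ! Suc m" using ps_less assms by auto
  fix x assume "x \<in> S" "ps ! m < x" "x < ps ! Suc m"
  then obtain q where "q < length ps" "ps ! q = x" using S_ps by blast
  then show False using ps_less assms \<open>ps ! m < x\<close> \<open>x < ps ! Suc m\<close> by (metis Suc_lessD not_less_eq)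
qed

end



context fwd begin

abbreviation "TT \<equiv> ltree E \<sigma>"

lemma leaf:
  assumes "x \<in> V" "x \<notin> set PP"
  shows "\<exists>w p. w < n \<and> x = \<sigma> ! w \<and> w \<notin> S \<and> \<sigma> ! w \<in> I \<and> isPar E \<sigma> p w \<and> \<sigma> ! p \<in> C \<and>
     p \<in> S \<and> nbhd TT x = {\<sigma> ! p}"
proof -
  obtain w where w: "w < n" "x = \<sigma> ! w" using inV assms by blast
  have wS: "w \<notin> S" using assms w set_PP by auto
  have w0: "w \<noteq> 0" using wS S0 by metis
  have wI: "\<sigma> ! w \<in> I" using wS w CI by (auto simp: S_def)
  have nochild: "\<not> isPar E \<sigma> w k" for k using wS SPar by blast
  obtain p where p: "isPar E \<sigma> p w" using par_ex w w0 by auto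
  have pC: "\<sigma> ! p \<in> C" using parC p wI by blast
  have pS: "p \<in> S" using SC pC p by (auto simp: isPar_def)
  have "nbhd TT x = {\<sigma> ! p}"
  proof
    show "nbhd TT x \<subseteq> {\<sigma> ! p}"
    proof
      fix y assume "y \<in> nbhd TT x"
      then obtain a b where ab: "a < n" "b < n" "x = \<sigma> ! a" "y = \<sigma> ! b" "isPar E \<sigma> b a \<or> isPar E \<sigma> a b"
        unfolding nbhd_def adj_ltree[OF dist] by blast
      have "a = w" using ab w nth_inj by auto
      then have "b = p" using ab nochild isPar_unique p by blast
      then show "y \<in> {\<sigma> ! p}" using ab by simp
    qed
    show "{\<sigma> ! p} \<subseteq> nbhd TT x"
    proof -
      have "p < n" using p by (auto simp: isPar_def)
      then show ?thesis using p w unfolding nbhd_def adj_ltree[OF dist] by blast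
    qed
  qed
  then show ?thesis using w wS wI p pC pS by blast
qed

lemma cond2:
  assumes "x \<in> V" "x \<notin> set PP" "m < length PP" "adj TT x (PP ! m)" "m < j" "j < length PP"
  shows "\<not> adj E x (PP ! j)"
proof
  assume A: "adj E x (PP ! j)"
  obtain w p where wp: "w < n" "x = \<sigma> ! w" "w \<notin> S" "\<sigma> ! w \<in> I" "isPar E \<sigma> p w" "\<sigma> ! p \<in> C"
    "p \<in> S" "nbhd TT x = {\<sigma> ! p}" using leaf assms(1,2) by blast
  have "PP ! m \<in> nbhd TT x" using assms(4) by (simp add: nbhd_def)
  then have "\<sigma> ! (ps ! m) = \<sigma> ! p" using wp PP_nth assms(3) len_PP by auto
  then have pm: "ps ! m = p" using nth_inj ps_n assms(3) len_PP wp(5) by (auto simp: isPar_def)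
  define q where "q = ps ! j"
  have qn: "q < n" "q \<in> S" using ps_n ps_S assms len_PP q_def by auto
  have pq: "p < q" using ps_less assms len_PP pm q_def by auto
  have Aq: "adj E (\<sigma> ! w) (\<sigma> ! q)" using A wp PP_nth assms len_PP q_def by auto
  consider "q < w" | "q = w" | "w < q" by linarith
  then show False
  proof cases
    case 1
    then show False using wp(5) pq Aq adj_sym by (metis isPar_def)
  next
    case 2 then show False using qn wp by simp
  next
    case 3
    have "adj E (\<sigma> ! w) (\<sigma> ! Suc w)" using cfin[of w "Suc w" q] 3 qn wp Aq by auto
    then have "isPar E \<sigma> w (Suc w)" using 3 qn by (auto simp: isPar_def)
    then show False using SPar wp by blast
  qed
qed

lemma nbhd_fin: "finite (nbhd E v)"
proof -
  have "nbhd E v \<subseteq> V" using sf(2) by (auto simp: nbhd_def)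
  then show ?thesis using sf(1) finite_subset by blast
qed

lemma cond3:
  assumes mL: "m < length PP" and aI: "PP ! m \<in> I"
  shows "let l = card (set (take m PP) \<inter> C) in
     set (take m PP) \<inter> C \<subseteq> nbhd E (PP ! m) \<and>
     {PP ! j | j. m < j \<and> j \<le> m + deg E (PP ! m) - l} \<subseteq> nbhd E (PP ! m)"
proof -
  define a where "a = ps ! m"
  have mps: "m < length ps" using mL len_PP by simp
  have an: "a < n" "a \<in> S" using ps_n ps_S mps a_def by auto
  have Pa: "PP ! m = \<sigma> ! a" using PP_nth mps a_def by simp
  have saI: "\<sigma> ! a \<in> I" using aI Pa by simp
  define Cb where "Cb = {j. j < a \<and> \<sigma> ! j \<in> C}"
  define K where "K = {k. a < k \<and> k < n \<and> adj E (\<sigma> ! a) (\<sigma> ! k)}"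
  have st: "set (take m ps) = {x \<in> S. x < a}"
  proof
    show "set (take m ps) \<subseteq> {x \<in> S. x < a}"
    proof
      fix x assume "x \<in> set (take m ps)"
      then obtain q where "q < m" "x = ps ! q" using mps by (auto simp: in_set_conv_nth)
      then show "x \<in> {x \<in> S. x < a}" using ps_S ps_less mps a_def by auto
    qed
    show "{x \<in> S. x < a} \<subseteq> set (take m ps)"
    proof
      fix x assume x: "x \<in> {x \<in> S. x < a}"
      then obtain q where q: "q < length ps" "ps ! q = x" using S_ps by blast
      then have "q < m" using ps_less mps a_def x by auto
      then show "x \<in> set (take m ps)" using q by (auto simp: in_set_conv_nth intro: exI[of _ q])
    qed
  qed
  have tC: "set (take m PP) \<inter> C = (!) \<sigma> ` Cb"
  proof -
    have "set (take m PP) = (!) \<sigma> ` {x \<in> S. x < a}" using st by (simp add: PP_def take_map)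
    then show ?thesis using SC an by (auto simp: Cb_def)
  qed
  have adjCb: "adj E (\<sigma> ! j) (\<sigma> ! a)" if "j \<in> Cb" for j
  proof -
    have a0: "a \<noteq> 0" using that by (auto simp: Cb_def)
    obtain k where k: "isPar E \<sigma> a k" using S_I an a0 saI by blast
    have "\<sigma> ! k \<in> C" using childC k saI by blast
    then show ?thesis using fin_i[of a k j] k saI that by (auto simp: isPar_def Cb_def)
  qed
  have partA: "set (take m PP) \<inter> C \<subseteq> nbhd E (PP ! m)"
    using tC adjCb Pa adj_sym[of E] by (auto simp: nbhd_def)
  have nb: "nbhd E (\<sigma> ! a) = (!) \<sigma> ` (Cb \<union> K)"
  proof
    show "nbhd E (\<sigma> ! a) \<subseteq> (!) \<sigma> ` (Cb \<union> K)"
    proof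
      fix u assume "u \<in> nbhd E (\<sigma> ! a)"
      then have A: "adj E (\<sigma> ! a) u" by (simp add: nbhd_def)
      then obtain t where t: "t < n" "u = \<sigma> ! t" using sf(2) inV by blast
      have "t \<noteq> a" using sf(2)[OF A] t by auto
      moreover have "t < a \<Longrightarrow> t \<in> Cb" using A t nbrI[of t a] saI adj_sym[of E] by (auto simp: Cb_def)
      moreover have "a < t \<Longrightarrow> t \<in> K" using A t by (auto simp: K_def)
      ultimately show "u \<in> (!) \<sigma> ` (Cb \<union> K)" using t by (metis UnI1 UnI2 image_eqI linorder_neqE_nat)
    qed
    show "(!) \<sigma> ` (Cb \<union> K) \<subseteq> nbhd E (\<sigma> ! a)"
      using adjCb adj_sym[of E] by (auto simp: nbhd_def K_def)
  qed
  have sub: "Cb \<union> K \<subseteq> {..<n}" using an by (auto simp: Cb_def K_def)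
  have inj: "inj_on ((!) \<sigma>) {..<n}" using nth_inj by (auto simp: inj_on_def)
  have fCb: "finite Cb" "finite K" using sub finite_subset by auto
  have dj: "Cb \<inter> K = {}" by (auto simp: Cb_def K_def)
  have degeq: "deg E (\<sigma> ! a) = card Cb + card K"
  proof -
    have "deg E (\<sigma> ! a) = card ((!) \<sigma> ` (Cb \<union> K))" by (simp add: deg_def nb)
    also have "\<dots> = card (Cb \<union> K)" using inj sub by (intro card_image) (rule inj_on_subset)
    also have "\<dots> = card Cb + card K" using fCb dj by (simp add: card_Un_disjoint)
    finally show ?thesis .
  qed
  have leq: "card (set (take m PP) \<inter> C) = card Cb"
    using tC inj sub by (simp add: card_image inj_on_subset)
  define r where "r = card K"
  have blockK: "a + t \<in> K" if "0 < t" "t \<le> r" for t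
  proof -
    have Kne: "K \<noteq> {}" using that r_def by auto
    define kmax where "kmax = Max K"
    have km: "kmax \<in> K" using Kne fCb Max_in kmax_def by blast
    have Ksub: "K \<subseteq> {a<..kmax}" using fCb kmax_def by (auto simp: K_def)
    have "{a<..kmax} \<subseteq> K"
    proof
      fix t assume "t \<in> {a<..kmax}"
      then show "t \<in> K" using cfin[of a t kmax] km saI by (auto simp: K_def)
    qed
    then have "K = {a<..kmax}" using Ksub by blast
    then have "r = kmax - a" using r_def by simp
    then show ?thesis using that \<open>K = {a<..kmax}\<close> km by auto
  qed
  have claim: "m + t < length ps \<and> ps ! (m + t) = a + t" if "t \<le> r" for t
    using that
  proof (induction t)
    case 0 then show ?case using mps a_def by simp
  next
    case (Suc t)
    then have IH: "m + t < length ps" "ps ! (m + t) = a + t" by auto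
    have "a + Suc t \<in> K" using blockK Suc.prems by blast
    then have "\<sigma> ! (a + Suc t) \<in> C" using sf(8) saI by (auto simp: K_def)
    then have "a + Suc t \<in> S" using SC \<open>a + Suc t \<in> K\<close> by (auto simp: K_def)
    then obtain q where q: "q < length ps" "ps ! q = a + Suc t" using S_ps by blast
    have "m + t < q" using ps_less[of "m + t" q] IH q by simp
    then have ql: "m + Suc t < length ps" using q by simp
    have "ps ! (m + Suc t) \<le> a + Suc t" using ps_le ql q \<open>m + t < q\<close> by (metis add_Suc_right Suc_leI)
    moreover have "ps ! (m + t) < ps ! (m + Suc t)" using ps_less[of "m + t" "m + Suc t"] IH ql by simp
    ultimately show ?case using IH ql by simp
  qed
  have partB: "{PP ! j | j. m < j \<and> j \<le> m + deg E (PP ! m) - card (set (take m PP) \<inter> C)} \<subseteq> nbhd E (PP ! m)"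
  proof
    fix u assume "u \<in> {PP ! j | j. m < j \<and> j \<le> m + deg E (PP ! m) - card (set (take m PP) \<inter> C)}"
    then obtain j where j: "u = PP ! j" "m < j" "j \<le> m + deg E (PP ! m) - card (set (take m PP) \<inter> C)" by blast
    then have jr: "j \<le> m + r" using degeq leq Pa r_def by simp
    define t where "t = j - m"
    have tt: "0 < t" "t \<le> r" "j = m + t" using j jr t_def by auto
    then have "m + t < length ps" "ps ! (m + t) = a + t" using claim by auto
    then have "u = \<sigma> ! (a + t)" using j tt PP_nth by simp
    moreover have "a + t \<in> K" using blockK tt by blast
    ultimately show "u \<in> nbhd E (PP ! m)" using Pa by (auto simp: K_def nbhd_def)
  qed
  show ?thesis using partA partB by (simp add: Let_def)
qed

end



context fwd begin

lemma fwd_main: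
  "\<exists>L P. L \<inter> set P = {} \<and> V = L \<union> set P \<and> is_path TT P \<and>
       (\<forall>w\<in>L. deg TT w = 1 \<and> (\<exists>v\<in>set P. adj TT w v)) \<and> C \<subseteq> set P \<and>
       (\<forall>w\<in>L. \<forall>i<length P. adj TT w (P ! i) \<longrightarrow>
          (\<forall>j. i < j \<and> j < length P \<longrightarrow> \<not> adj E w (P ! j))) \<and>
       (\<forall>i<length P. P ! i \<in> I \<longrightarrow>
          (let l = card (set (take i P) \<inter> C) in
             set (take i P) \<inter> C \<subseteq> nbhd E (P ! i) \<and>
             {P ! j | j. i < j \<and> j \<le> i + deg E (P ! i) - l} \<subseteq> nbhd E (P ! i)))"
proof (intro exI conjI)
  have PV: "set PP \<subseteq> V" using set_PP nthV S_lt by auto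
  show "(V - set PP) \<inter> set PP = {}" by auto
  show "V = (V - set PP) \<union> set PP" using PV by auto
  show "is_path TT PP"
    unfolding is_path_def
  proof (intro conjI allI impI)
    show "PP \<noteq> []" using ps_ne len_PP by auto
    show "distinct PP" by (rule dist_PP)
    fix i assume i: "Suc i < length PP"
    then have "isPar E \<sigma> (ps ! i) (ps ! Suc i)" using chain_ps len_PP by simp
    moreover have "ps ! i < n" "ps ! Suc i < n" using ps_n i len_PP by auto
    ultimately have "adj TT (\<sigma> ! (ps ! i)) (\<sigma> ! (ps ! Suc i))"
      unfolding adj_ltree[OF dist] by blast
    then show "adj TT (PP ! i) (PP ! Suc i)" using PP_nth i len_PP by simp
  qed
  show "\<forall>w\<in>V - set PP. deg TT w = 1 \<and> (\<exists>v\<in>set PP. adj TT w v)"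
  proof
    fix x assume x: "x \<in> V - set PP"
    then obtain w p where wp: "w < n" "x = \<sigma> ! w" "isPar E \<sigma> p w" "p \<in> S" "nbhd TT x = {\<sigma> ! p}"
      using leaf by blast
    have "\<sigma> ! p \<in> set PP" using set_PP wp by auto
    moreover have "adj TT x (\<sigma> ! p)" using wp by (auto simp: nbhd_def)
    ultimately show "deg TT x = 1 \<and> (\<exists>v\<in>set PP. adj TT x v)" using wp by (auto simp: deg_def)
  qed
  show "C \<subseteq> set PP"
  proof
    fix c assume c: "c \<in> C"
    then obtain i where "i < n" "c = \<sigma> ! i" using inV sf(4) by blast
    then show "c \<in> set PP" using SC c set_PP by auto
  qed
  show "\<forall>w\<in>V - set PP. \<forall>i<length PP. adj TT w (PP ! i) \<longrightarrow>
          (\<forall>j. i < j \<and> j < length PP \<longrightarrow> \<not> adj E w (PP ! j))"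
    using cond2 by blast
  show "\<forall>i<length PP. PP ! i \<in> I \<longrightarrow>
          (let l = card (set (take i PP) \<inter> C) in
             set (take i PP) \<inter> C \<subseteq> nbhd E (PP ! i) \<and>
             {PP ! j | j. i < j \<and> j \<le> i + deg E (PP ! i) - l} \<subseteq> nbhd E (PP ! i))"
    using cond3 by blast
qed

end

lemma forward:
  assumes "split_graph V E C I" "connected V E" "search_ordering X V E \<sigma>"
  shows "\<exists>L P. L \<inter> set P = {} \<and> V = L \<union> set P \<and> is_path (ltree E \<sigma>) P \<and>
       (\<forall>w\<in>L. deg (ltree E \<sigma>) w = 1 \<and> (\<exists>v\<in>set P. adj (ltree E \<sigma>) w v)) \<and> C \<subseteq> set P \<and>
       (\<forall>w\<in>L. \<forall>i<length P. adj (ltree E \<sigma>) w (P ! i) \<longrightarrow>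
          (\<forall>j. i < j \<and> j < length P \<longrightarrow> \<not> adj E w (P ! j))) \<and>
       (\<forall>i<length P. P ! i \<in> I \<longrightarrow>
          (let l = card (set (take i P) \<inter> C) in
             set (take i P) \<inter> C \<subseteq> nbhd E (P ! i) \<and>
             {P ! j | j. i < j \<and> j \<le> i + deg E (P ! i) - l} \<subseteq> nbhd E (P ! i)))"
proof -
  have g: "is_ordering V \<sigma>" and H: "\<And>i k. 0 < i \<Longrightarrow> i \<le> k \<Longrightarrow> k < length \<sigma> \<Longrightarrow>
      \<not> sl X (length \<sigma>) (Aset E \<sigma> i (\<sigma> ! i)) (Aset E \<sigma> i (\<sigma> ! k))"
    using search_to_gen[OF assms(3)] by auto
  interpret fwd V E C I \<sigma>
  proof
    show "split_graph V E C I" "connected V E" "is_ordering V \<sigma>" using assms g by auto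
    fix i k assume ik: "i \<le> k" "k < length \<sigma>" and sub: "Aset E \<sigma> i (\<sigma> ! i) \<subseteq> Aset E \<sigma> i (\<sigma> ! k)"
    show "Aset E \<sigma> i (\<sigma> ! i) = Aset E \<sigma> i (\<sigma> ! k)"
    proof (rule ccontr)
      assume ne: "Aset E \<sigma> i (\<sigma> ! i) \<noteq> Aset E \<sigma> i (\<sigma> ! k)"
      then have i0: "0 < i" by (auto simp: Aset_def)
      have "Aset E \<sigma> i (\<sigma> ! k) \<subseteq> {..<length \<sigma>}" using Aset_sub ik by fastforce
      then have "sl X (length \<sigma>) (Aset E \<sigma> i (\<sigma> ! i)) (Aset E \<sigma> i (\<sigma> ! k))"
        using sub ne by (intro sl_psub) auto
      then show False using H i0 ik by blast
    qed
  qed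
  show ?thesis by (rule fwd_main)
qed




lemma exists_max:
  assumes "finite W" "W \<noteq> {}" "\<forall>x. \<not> R x x" "\<forall>x y z. R x y \<longrightarrow> R y z \<longrightarrow> R x z"
  shows "\<exists>m\<in>W. \<forall>y\<in>W. \<not> R m y"
  using assms(1,2)
proof (induction W rule: finite_ne_induct)
  case (singleton x) then show ?case using assms(3) by auto
next
  case (insert x F)
  then obtain m where m: "m \<in> F" "\<forall>y\<in>F. \<not> R m y" by blast
  show ?case
  proof (cases "R m x")
    case True
    have "\<forall>y\<in>insert x F. \<not> R x y"
    proof
      fix y assume "y \<in> insert x F"
      then show "\<not> R x y"
      proof
        assume "y = x" then show ?thesis using assms(3) by simp
      next
        assume "y \<in> F" then show ?thesis using True m(2) assms(4) by metis
      qed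
    qed
    then show ?thesis by blast
  next
    case False then show ?thesis using m by blast
  qed
qed

lemma order_max:
  assumes "finite W" "\<forall>x. \<not> R x x" "\<forall>x y z. R x y \<longrightarrow> R y z \<longrightarrow> R x z"
  shows "\<exists>ws. distinct ws \<and> set ws = W \<and> (\<forall>i k. i \<le> k \<and> k < length ws \<longrightarrow> \<not> R (ws ! i) (ws ! k))"
  using assms(1)
proof (induction W rule: finite_psubset_induct)
  case (psubset W)
  show ?case
  proof (cases "W = {}")
    case True then show ?thesis by (intro exI[of _ "[]"]) auto
  next
    case False
    from exists_max[OF psubset.hyps(1) False assms(2) assms(3)]
    obtain m where m: "m \<in> W" "\<forall>y\<in>W. \<not> R m y" by (elim bexE)
    have "W - {m} \<subset> W" using m by blast
    from psubset.IH[OF this] obtain ws where ws: "distinct ws" "set ws = W - {m}"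
      "\<forall>i k. i \<le> k \<and> k < length ws \<longrightarrow> \<not> R (ws ! i) (ws ! k)"
      by blast
    show ?thesis
    proof (intro exI[of _ "m # ws"] conjI allI impI)
      show "distinct (m # ws)" "set (m # ws) = W" using ws m by auto
      fix i k assume ik: "i \<le> k \<and> k < length (m # ws)"
      show "\<not> R ((m # ws) ! i) ((m # ws) ! k)"
      proof (cases i)
        case 0
        have "(m # ws) ! k \<in> set (m # ws)" using ik by (intro nth_mem) simp
        then have "(m # ws) ! k \<in> W" using ws m by auto
        then show ?thesis using 0 m by simp
      next
        case (Suc i')
        then obtain k' where "k = Suc k'" using ik by (cases k) auto
        then have "i' \<le> k'" "k' < length ws" using ik Suc by auto
        then show ?thesis using ws(3) Suc \<open>k = Suc k'\<close> by simp
      qed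
    qed
  qed
qed




locale bwd =
  fixes V :: "'a set" and E :: "'a set set" and C I :: "'a set" and T :: "'a set set"
    and L :: "'a set" and P :: "'a list" and X :: search
  assumes split: "split_graph V E C I" and conn: "connected V E" and span: "spanning_tree V E T"
    and disj: "L \<inter> set P = {}" and VLP: "V = L \<union> set P" and path: "is_path T P"
    and leafs: "\<forall>w\<in>L. deg T w = 1 \<and> (\<exists>v\<in>set P. adj T w v)" and CP: "C \<subseteq> set P"
    and c2: "\<forall>w\<in>L. \<forall>i<length P. adj T w (P ! i) \<longrightarrow>
          (\<forall>j. i < j \<and> j < length P \<longrightarrow> \<not> adj E w (P ! j))"
    and c3: "\<forall>i<length P. P ! i \<in> I \<longrightarrow>
          (let l = card (set (take i P) \<inter> C) in
             set (take i P) \<inter> C \<subseteq> nbhd E (P ! i) \<and>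
             {P ! j | j. i < j \<and> j \<le> i + deg E (P ! i) - l} \<subseteq> nbhd E (P ! i))"
begin

lemmas sf = split_facts[OF split]

abbreviation "p \<equiv> length P"

lemma finL: "finite L" using sf(1) VLP by auto

lemma LI: "w \<in> L \<Longrightarrow> w \<in> I"
  using CP disj VLP sf(3) by blast

lemma distP: "distinct P" using path by (simp add: is_path_def)

lemma TE: "adj T u v \<Longrightarrow> adj E u v"
  using span by (auto simp: spanning_tree_def adj_def)

lemma Tsym: "adj T u v = adj T v u" by (rule adj_sym)

definition B :: "'a \<Rightarrow> nat set" where "B w = {j. j < p \<and> adj E (P ! j) w}"

definition NN :: nat where "NN = p + card L"

definition R :: "'a \<Rightarrow> 'a \<Rightarrow> bool" where "R x y = sl X NN (B x) (B y)"

definition ws :: "'a list" where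
  "ws = (SOME ws. distinct ws \<and> set ws = L \<and> (\<forall>i k. i \<le> k \<and> k < length ws \<longrightarrow> \<not> R (ws ! i) (ws ! k)))"

lemma ws_good: "distinct ws \<and> set ws = L \<and> (\<forall>i k. i \<le> k \<and> k < length ws \<longrightarrow> \<not> R (ws ! i) (ws ! k))"
proof -
  have "\<exists>ws. distinct ws \<and> set ws = L \<and> (\<forall>i k. i \<le> k \<and> k < length ws \<longrightarrow> \<not> R (ws ! i) (ws ! k))"
    using finL by (rule order_max) (auto simp: R_def sl_irrefl intro: sl_trans)
  then show ?thesis unfolding ws_def by (rule someI_ex)
qed

definition \<sigma> :: "'a list" where "\<sigma> = P @ ws"

lemma len_ws: "length ws = card L" using ws_good distinct_card by metis

lemma len_\<sigma>: "length \<sigma> = NN" by (simp add: \<sigma>_def NN_def len_ws)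

lemma ord: "is_ordering V \<sigma>"
proof -
  have "distinct \<sigma>" unfolding \<sigma>_def distinct_append using ws_good distP disj by blast
  moreover have "set \<sigma> = V" unfolding \<sigma>_def using ws_good VLP by auto
  ultimately show ?thesis by (simp add: is_ordering_def)
qed

lemma \<sigma>P: "i < p \<Longrightarrow> \<sigma> ! i = P ! i" by (simp add: \<sigma>_def nth_append)

lemma \<sigma>L: "p \<le> i \<Longrightarrow> i < length \<sigma> \<Longrightarrow> \<sigma> ! i = ws ! (i - p) \<and> \<sigma> ! i \<in> L"
  using ws_good by (auto simp: \<sigma>_def nth_append)

lemma AsetL: assumes "p \<le> i" "i < length \<sigma>" "w \<in> L" shows "Aset E \<sigma> i w = B w"
proof
  show "Aset E \<sigma> i w \<subseteq> B w"
  proof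
    fix j assume "j \<in> Aset E \<sigma> i w"
    then have j: "j < i" "adj E (\<sigma> ! j) w" by (auto simp: Aset_def)
    show "j \<in> B w"
    proof (cases "j < p")
      case True then show ?thesis using j \<sigma>P by (auto simp: B_def)
    next
      case False
      have "j < length \<sigma>" using j assms by simp
      moreover have "p \<le> j" using False by simp
      ultimately have "\<sigma> ! j \<in> L" using \<sigma>L[of j] by blast
      then show ?thesis using j LI assms sf(7) by blast
    qed
  qed
  show "B w \<subseteq> Aset E \<sigma> i w" using assms \<sigma>P by (auto simp: B_def Aset_def)
qed


lemma take_set: "j \<le> p \<Longrightarrow> set (take j P) = (!) P ` {..<j}"
proof -
  assume "j \<le> p"
  then show ?thesis by (auto simp: in_set_conv_nth image_def) (metis lessThan_iff nth_take)+
qed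

lemma nbhd_finE: "finite (nbhd E v)"
proof -
  have "nbhd E v \<subseteq> V" using sf(2) by (auto simp: nbhd_def)
  then show ?thesis using sf(1) finite_subset by blast
qed

lemma PV: "i < p \<Longrightarrow> P ! i \<in> V" using VLP nth_mem by blast

lemma injP: "inj_on ((!) P) {..<p}" using distP by (auto simp: inj_on_def nth_eq_iff_index_eq)

lemma key_P:
  assumes ji: "j < i" and ip: "i < p" and ik: "i \<le> k" and kn: "k < length \<sigma>"
    and A: "adj E (P ! j) (\<sigma> ! k)"
  shows "adj E (P ! j) (P ! i)"
proof (cases "P ! j \<in> C")
  case True
  show ?thesis
  proof (cases "P ! i \<in> C")
    case True
    have "P ! j \<noteq> P ! i" using distP ji ip by (simp add: nth_eq_iff_index_eq)
    then show ?thesis using sf(6) True \<open>P ! j \<in> C\<close> by blast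
  next
    case False
    then have iI: "P ! i \<in> I" using sf(3) PV ip by blast
    have "P ! j \<in> set (take i P) \<inter> C" using True ji ip take_set by auto
    then have "P ! j \<in> nbhd E (P ! i)" using c3 ip iI by (auto simp: Let_def)
    then show ?thesis using adj_sym[of E] by (auto simp: nbhd_def)
  qed
next
  case False
  then have jI: "P ! j \<in> I" using sf(3) PV ji ip by auto
  have kC: "\<sigma> ! k \<in> C" using sf(8) A jI by blast
  have kp: "k < p"
  proof (rule ccontr)
    assume "\<not> k < p"
    then have "p \<le> k" by simp
    then have "\<sigma> ! k \<in> L" using \<sigma>L kn by blast
    then show False using LI kC sf(3) sf(5) by blast
  qed
  then have kP: "\<sigma> ! k = P ! k" using \<sigma>P by simp
  define d where "d = deg E (P ! j)"
  define lj where "lj = card (set (take j P) \<inter> C)"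
  have jp: "j < p" using ji ip by simp
  have c3a: "set (take j P) \<inter> C \<subseteq> nbhd E (P ! j)" and
    c3b: "{P ! t | t. j < t \<and> t \<le> j + d - lj} \<subseteq> nbhd E (P ! j)"
    using c3 jp jI by (auto simp: Let_def d_def lj_def)
  have ljd: "lj \<le> d" unfolding lj_def d_def deg_def using c3a nbhd_finE by (rule card_mono[rotated])
  define r where "r = d - lj"
  have jr: "j + d - lj = j + r" using ljd r_def by simp
  have kle: "k \<le> j + r"
  proof (rule ccontr)
    assume "\<not> k \<le> j + r"
    then have kgt: "j + r < k" by simp
    define Ij where "Ij = {t. t < j \<and> P ! t \<in> C}"
    have tC: "set (take j P) \<inter> C = (!) P ` Ij" using take_set jp by (auto simp: Ij_def)
    have sub: "Ij \<union> {j<..j+r} \<union> {k} \<subseteq> {..<p}" using kp kgt jp by (auto simp: Ij_def)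
    have fin: "finite Ij" by (simp add: Ij_def)
    have "card ((!) P ` (Ij \<union> {j<..j+r} \<union> {k})) = card (Ij \<union> {j<..j+r} \<union> {k})"
      using injP sub by (intro card_image) (rule inj_on_subset)
    also have "\<dots> = card Ij + r + 1"
    proof -
      have d1: "Ij \<inter> {j<..j+r} = {}" by (auto simp: Ij_def)
      have "card (Ij \<union> {j<..j+r}) = card Ij + r" using fin d1 by (simp add: card_Un_disjoint)
      moreover have "k \<notin> Ij \<union> {j<..j+r}" using kgt ji ik by (auto simp: Ij_def)
      ultimately show ?thesis using fin by simp
    qed
    finally have cM: "card ((!) P ` (Ij \<union> {j<..j+r} \<union> {k})) = card Ij + r + 1" .
    have "(!) P ` (Ij \<union> {j<..j+r} \<union> {k}) \<subseteq> nbhd E (P ! j)"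
    proof -
      have "(!) P ` Ij \<subseteq> nbhd E (P ! j)" using c3a tC by simp
      moreover have "(!) P ` {j<..j+r} \<subseteq> nbhd E (P ! j)"
      proof
        fix u assume "u \<in> (!) P ` {j<..j+r}"
        then obtain t where "j < t" "t \<le> j + r" "u = P ! t" by auto
        then have "u \<in> {P ! t | t. j < t \<and> t \<le> j + d - lj}" using jr by auto
        then show "u \<in> nbhd E (P ! j)" using c3b by blast
      qed
      moreover have "P ! k \<in> nbhd E (P ! j)" using A kP by (simp add: nbhd_def)
      ultimately show ?thesis by auto
    qed
    then have "card Ij + r + 1 \<le> d" using cM card_mono[OF nbhd_finE] d_def deg_def by metis
    moreover have "card Ij = lj" unfolding lj_def tC using injP
      by (intro card_image[symmetric]) (rule inj_on_subset, use jp in \<open>auto simp: Ij_def\<close>)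
    ultimately show False using r_def ljd by simp
  qed
  have "P ! i \<in> {P ! t | t. j < t \<and> t \<le> j + d - lj}" using ji ik kle jr by auto
  then show ?thesis using c3b by (auto simp: nbhd_def)
qed

lemma main_cond:
  assumes "0 < i" "i \<le> k" "k < length \<sigma>"
  shows "\<not> sl X (length \<sigma>) (Aset E \<sigma> i (\<sigma> ! i)) (Aset E \<sigma> i (\<sigma> ! k))"
proof (cases "i < p")
  case True
  have "Aset E \<sigma> i (\<sigma> ! k) \<subseteq> Aset E \<sigma> i (\<sigma> ! i)"
  proof
    fix j assume "j \<in> Aset E \<sigma> i (\<sigma> ! k)"
    then have j: "j < i" "adj E (\<sigma> ! j) (\<sigma> ! k)" by (auto simp: Aset_def)
    have "adj E (P ! j) (P ! i)" using key_P[OF j(1) True assms(2,3)] j \<sigma>P True by simp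
    then show "j \<in> Aset E \<sigma> i (\<sigma> ! i)" using j \<sigma>P True by (auto simp: Aset_def)
  qed
  moreover have "Aset E \<sigma> i (\<sigma> ! i) \<subseteq> {..<length \<sigma>}" using Aset_sub assms by fastforce
  ultimately show ?thesis by (rule sl_sub)
next
  case False
  then have pi: "p \<le> i" by simp
  have il: "i < length \<sigma>" "p \<le> k" using assms pi by auto
  have iL: "\<sigma> ! i = ws ! (i - p)" "\<sigma> ! i \<in> L" using \<sigma>L[OF pi il(1)] by auto
  have kL: "\<sigma> ! k = ws ! (k - p)" "\<sigma> ! k \<in> L" using \<sigma>L[OF il(2) assms(3)] by auto
  have "i - p \<le> k - p" "k - p < length ws" using assms pi by (auto simp: \<sigma>_def)
  then have "\<not> R (ws ! (i - p)) (ws ! (k - p))" using ws_good by blast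
  then show ?thesis using AsetL[OF pi _ iL(2)] AsetL[OF pi _ kL(2)] iL kL assms
    by (simp add: R_def len_\<sigma>)
qed

lemma search: "search_ordering X V E \<sigma>"
proof (rule gen_to_search[OF ord])
  show "\<sigma> \<noteq> []" using path by (simp add: \<sigma>_def is_path_def)
  show "\<And>i k. 0 < i \<Longrightarrow> i \<le> k \<Longrightarrow> k < length \<sigma> \<Longrightarrow>
      \<not> sl X (length \<sigma>) (Aset E \<sigma> i (\<sigma> ! i)) (Aset E \<sigma> i (\<sigma> ! k))"
    by (rule main_cond)
qed

end



context bwd begin

lemma treeT: "graph V T" "\<not> has_cycle T"
  using span by (auto simp: spanning_tree_def is_tree_def)

lemma pathadj: "Suc j < p \<Longrightarrow> adj T (P ! j) (P ! Suc j)"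
  using path by (simp add: is_path_def)

lemma pathadj': assumes "0 < i" "i < p" shows "adj T (P ! (i - 1)) (P ! i)"
proof -
  have "Suc (i - 1) < p" "Suc (i - 1) = i" using assms by auto
  then show ?thesis using pathadj[of "i - 1"] by simp
qed

lemma parP: assumes "0 < i" "i < p" shows "isPar E \<sigma> (i - 1) i"
proof -
  have "adj T (P ! (i - 1)) (P ! Suc (i - 1))" using pathadj' assms by simp
  then have "adj E (P ! (i - 1)) (P ! i)" using TE assms by simp
  then show ?thesis using assms \<sigma>P by (auto simp: isPar_def \<sigma>_def)
qed

lemma leafm: "w \<in> L \<Longrightarrow> \<exists>m<p. adj T w (P ! m)"
  using leafs by (metis in_set_conv_nth)

lemma parL:
  assumes "p \<le> i" "i < length \<sigma>" "m < p" "adj T (\<sigma> ! i) (P ! m)"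
  shows "isPar E \<sigma> m i"
proof -
  have wL: "\<sigma> ! i \<in> L" using \<sigma>L assms by blast
  have "adj E (\<sigma> ! m) (\<sigma> ! i)" using TE[OF assms(4)] \<sigma>P assms adj_sym[of E] by simp
  moreover have "\<not> adj E (\<sigma> ! k) (\<sigma> ! i)" if "m < k" "k < i" for k
  proof (cases "k < p")
    case True
    then have "\<not> adj E (\<sigma> ! i) (P ! k)" using c2 wL assms that by blast
    then show ?thesis using \<sigma>P True adj_sym[of E] by simp
  next
    case False
    then have "p \<le> k" "k < length \<sigma>" using that assms by auto
    then have "\<sigma> ! k \<in> L" using \<sigma>L by blast
    then show ?thesis using wL LI sf(7) by blast
  qed
  ultimately show ?thesis using assms by (auto simp: isPar_def)
qed

lemma nbhd_leaf:
  assumes "w \<in> L" "adj T w (P ! m)" shows "nbhd T w = {P ! m}"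
proof -
  have "card (nbhd T w) = 1" using leafs assms by (auto simp: deg_def)
  then obtain u where u: "nbhd T w = {u}" by (rule card_1_singletonE)
  moreover have "P ! m \<in> nbhd T w" using assms by (simp add: nbhd_def)
  ultimately show ?thesis by simp
qed

lemma L_idx: "w \<in> L \<Longrightarrow> \<exists>i. p \<le> i \<and> i < length \<sigma> \<and> \<sigma> ! i = w"
proof -
  assume "w \<in> L"
  then obtain q where q: "q < length ws" "ws ! q = w" using ws_good by (metis in_set_conv_nth)
  then show ?thesis by (intro exI[of _ "p + q"]) (auto simp: \<sigma>_def nth_append)
qed

lemma no_chord:
  assumes ab: "a < b" "b < p" and A: "adj T (P ! a) (P ! b)"
  shows "b = Suc a"
proof (rule ccontr)
  assume nb: "b \<noteq> Suc a"
  then have ab2: "a + 2 \<le> b" using ab by simp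
  define c where "c = take (b - a + 1) (drop a P)"
  have lc: "length c = b - a + 1" using ab by (simp add: c_def)
  have cn: "c ! t = P ! (a + t)" if "t < b - a + 1" for t using that ab by (simp add: c_def)
  have "is_path T c" unfolding is_path_def
  proof (intro conjI allI impI)
    show "c \<noteq> []" using lc by auto
    show "distinct c" using distP by (simp add: c_def)
    fix t assume t: "Suc t < length c"
    have "adj T (P ! (a + t)) (P ! Suc (a + t))" using path t lc ab by (auto simp: is_path_def)
    then show "adj T (c ! t) (c ! Suc t)" using cn t lc by simp
  qed
  moreover have "adj T (last c) (hd c)"
  proof -
    have "c \<noteq> []" using lc by auto
    then have "last c = c ! (b - a)" using lc by (simp add: last_conv_nth)
    then have "last c = P ! b" using cn[of "b - a"] ab by simp
    moreover have "hd c = P ! a" using \<open>c \<noteq> []\<close> cn[of 0] by (simp add: hd_conv_nth)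
    ultimately show ?thesis using A adj_sym[of T] by simp
  qed
  moreover have "3 \<le> length c" using lc ab2 by simp
  ultimately have "has_cycle T" by (auto simp: has_cycle_def)
  then show False using treeT by simp
qed

lemma Tadj_ltree: assumes A: "adj T x y" shows "adj (ltree E \<sigma>) x y"
proof -
  have dist\<sigma>: "distinct \<sigma>" using ord by (simp add: is_ordering_def)
  have leaf_case: "adj (ltree E \<sigma>) x y" if xL: "x \<in> L" and Axy: "adj T x y" for x y
  proof -
    obtain m where m: "m < p" "adj T x (P ! m)" using leafm xL by blast
    have "y = P ! m" using nbhd_leaf[OF xL m(2)] Axy by (auto simp: nbhd_def)
    obtain i where i: "p \<le> i" "i < length \<sigma>" "\<sigma> ! i = x" using L_idx xL by blast
    have "isPar E \<sigma> m i" using parL i m by simp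
    moreover have "m < length \<sigma>" "y = \<sigma> ! m" using m i \<sigma>P \<open>y = P ! m\<close> by auto
    ultimately show ?thesis unfolding adj_ltree[OF dist\<sigma>] using i by blast
  qed
  have gV: "x \<in> V" "y \<in> V" "x \<noteq> y" using treeT(1) A
    by (auto simp: graph_def adj_def doubleton_eq_iff) 
  show ?thesis
  proof (cases "x \<in> L")
    case True then show ?thesis using leaf_case A by blast
  next
    case False
    show ?thesis
    proof (cases "y \<in> L")
      case True then show ?thesis using leaf_case A adj_sym by metis
    next
      case False
      have "x \<in> set P" "y \<in> set P" using gV VLP \<open>x \<notin> L\<close> False by auto
      then obtain a b where ab: "a < p" "b < p" "x = P ! a" "y = P ! b" by (metis in_set_conv_nth)
      have "a \<noteq> b" using ab gV by auto
      have pair: "adj (ltree E \<sigma>) (P ! a') (P ! b')" if "a' < b'" "b' < p" "adj T (P ! a') (P ! b')" for a' b'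
      proof -
        have "b' = Suc a'" using no_chord that by blast
        then have "isPar E \<sigma> a' b'" using parP[of b'] that by simp
        moreover have "P ! a' = \<sigma> ! a'" "P ! b' = \<sigma> ! b'" using \<sigma>P that by auto
        moreover have "a' < length \<sigma>" "b' < length \<sigma>" using that by (auto simp: \<sigma>_def)
        ultimately show ?thesis unfolding adj_ltree[OF dist\<sigma>] by metis
      qed
      show ?thesis
      proof (cases "a < b")
        case True then show ?thesis using pair ab A by blast
      next
        case False
        then have "b < a" using \<open>a \<noteq> b\<close> by simp
        then have "adj (ltree E \<sigma>) (P ! b) (P ! a)" using pair ab A adj_sym[of T] by metis
        then show ?thesis using ab adj_sym by metis
      qed
    qed
  qed
qed

lemma ltree_eq: "ltree E \<sigma> = T"
proof
  show "ltree E \<sigma> \<subseteq> T"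
  proof
    fix e assume "e \<in> ltree E \<sigma>"
    then obtain i j where e: "e = {\<sigma> ! i, \<sigma> ! j}" and pj: "isPar E \<sigma> j i" unfolding ltree_iff by blast
    have ji: "j < i" "i < length \<sigma>" using pj by (auto simp: isPar_def)
    show "e \<in> T"
    proof (cases "i < p")
      case True
      have "j = i - 1" using isPar_unique[OF pj parP[of i]] ji True by simp
      moreover have "adj T (P ! (i - 1)) (P ! i)" using pathadj' True ji by simp
      ultimately show ?thesis using e \<sigma>P True ji by (auto simp: adj_def insert_commute)
    next
      case False
      then have "p \<le> i" by simp
      then have "\<sigma> ! i \<in> L" using \<sigma>L ji by blast
      then obtain m where m: "m < p" "adj T (\<sigma> ! i) (P ! m)" using leafm by blast
      have "j = m" using isPar_unique[OF pj parL[of i m]] m ji False by simp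
      then show ?thesis using e m \<sigma>P by (auto simp: adj_def)
    qed
  qed
  show "T \<subseteq> ltree E \<sigma>"
  proof
    fix e assume eT: "e \<in> T"
    then obtain x y where "e = {x, y}" using treeT(1) by (auto simp: graph_def)
    then have "adj T x y" using eT by (simp add: adj_def)
    then have "adj (ltree E \<sigma>) x y" by (rule Tadj_ltree)
    then show "e \<in> ltree E \<sigma>" using \<open>e = {x, y}\<close> by (simp add: adj_def)
  qed
qed

end


theorem theorem5:
  fixes V C I :: "'a set" and E T :: "'a set set" and X :: search
  assumes "split_graph V E C I" and "connected V E" and "spanning_tree V E T"
  shows "(\<exists>\<sigma>. search_ordering X V E \<sigma> \<and> ltree E \<sigma> = T) \<longleftrightarrow>
    (\<exists>L P. L \<inter> set P = {} \<and> V = L \<union> set P \<and> is_path T P \<and>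
       (\<forall>w\<in>L. deg T w = 1 \<and> (\<exists>v\<in>set P. adj T w v)) \<and> C \<subseteq> set P \<and>
       (\<forall>w\<in>L. \<forall>i<length P. adj T w (P ! i) \<longrightarrow>
          (\<forall>j. i < j \<and> j < length P \<longrightarrow> \<not> adj E w (P ! j))) \<and>
       (\<forall>i<length P. P ! i \<in> I \<longrightarrow>
          (let l = card (set (take i P) \<inter> C) in
             set (take i P) \<inter> C \<subseteq> nbhd E (P ! i) \<and>
             {P ! j | j. i < j \<and> j \<le> i + deg E (P ! i) - l} \<subseteq> nbhd E (P ! i))))"
proof
  assume "\<exists>\<sigma>. search_ordering X V E \<sigma> \<and> ltree E \<sigma> = T"
  then obtain \<sigma> where s: "search_ordering X V E \<sigma>" and eq: "ltree E \<sigma> = T" by blast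
  show "\<exists>L P. L \<inter> set P = {} \<and> V = L \<union> set P \<and> is_path T P \<and>
       (\<forall>w\<in>L. deg T w = 1 \<and> (\<exists>v\<in>set P. adj T w v)) \<and> C \<subseteq> set P \<and>
       (\<forall>w\<in>L. \<forall>i<length P. adj T w (P ! i) \<longrightarrow>
          (\<forall>j. i < j \<and> j < length P \<longrightarrow> \<not> adj E w (P ! j))) \<and>
       (\<forall>i<length P. P ! i \<in> I \<longrightarrow>
          (let l = card (set (take i P) \<inter> C) in
             set (take i P) \<inter> C \<subseteq> nbhd E (P ! i) \<and>
             {P ! j | j. i < j \<and> j \<le> i + deg E (P ! i) - l} \<subseteq> nbhd E (P ! i)))"
    using forward[OF assms(1,2) s] unfolding eq .
next
  assume "\<exists>L P. L \<inter> set P = {} \<and> V = L \<union> set P \<and> is_path T P \<and>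
       (\<forall>w\<in>L. deg T w = 1 \<and> (\<exists>v\<in>set P. adj T w v)) \<and> C \<subseteq> set P \<and>
       (\<forall>w\<in>L. \<forall>i<length P. adj T w (P ! i) \<longrightarrow>
          (\<forall>j. i < j \<and> j < length P \<longrightarrow> \<not> adj E w (P ! j))) \<and>
       (\<forall>i<length P. P ! i \<in> I \<longrightarrow>
          (let l = card (set (take i P) \<inter> C) in
             set (take i P) \<inter> C \<subseteq> nbhd E (P ! i) \<and>
             {P ! j | j. i < j \<and> j \<le> i + deg E (P ! i) - l} \<subseteq> nbhd E (P ! i)))"
  then obtain L P where h: "L \<inter> set P = {}" "V = L \<union> set P" "is_path T P"
       "\<forall>w\<in>L. deg T w = 1 \<and> (\<exists>v\<in>set P. adj T w v)" "C \<subseteq> set P"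
       "\<forall>w\<in>L. \<forall>i<length P. adj T w (P ! i) \<longrightarrow>
          (\<forall>j. i < j \<and> j < length P \<longrightarrow> \<not> adj E w (P ! j))"
       "\<forall>i<length P. P ! i \<in> I \<longrightarrow>
          (let l = card (set (take i P) \<inter> C) in
             set (take i P) \<inter> C \<subseteq> nbhd E (P ! i) \<and>
             {P ! j | j. i < j \<and> j \<le> i + deg E (P ! i) - l} \<subseteq> nbhd E (P ! i))"
    by blast
  interpret b: bwd V E C I T L P X
    using assms h by unfold_locales
  show "\<exists>\<sigma>. search_ordering X V E \<sigma> \<and> ltree E \<sigma> = T"
    using b.search b.ltree_eq by blast
qed

end
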